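(* Let $X$ be a Banach lattice and $P\colon X\to X$ a strictly positive projection. If the only closed ideals $J$ of $X$ with $P(J)\subseteq J$ are $\{0\}$ and $X$, then $P$ has rank $1$.
   Context: A projection $P$ ($P^2=P$, linear) on a vector lattice is strictly positive if $x>0$ implies $Px>0$. *)

theory Defs
  imports "HOL-Analysis.Analysis"
begin

text \<open>Banach lattices are modelled on a type that is a real Banach space,
  an ordered real vector space and a lattice (hence a vector lattice), together
  with the lattice-norm axiom below.\<close>

definition labs :: "'a::{ordered_real_vector, lattice} \<Rightarrow> 'a" where
  "labs x = sup x (- x)"

definition banach_lattice_norm :: "'a::{banach, ordered_real_vector, lattice} itself \<Rightarrow> bool" where
  "banach_lattice_norm _ \<longleftrightarrow> (\<forall>x y::'a. labs x \<le> labs y \<longrightarrow> norm x \<le> norm y)"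

definition lattice_ideal :: "'a::{ordered_real_vector, lattice} set \<Rightarrow> bool" where
  "lattice_ideal J \<longleftrightarrow> subspace J \<and> (\<forall>x y. y \<in> J \<and> labs x \<le> labs y \<longrightarrow> x \<in> J)"

definition projection :: "('a::real_vector \<Rightarrow> 'a) \<Rightarrow> bool" where
  "projection P \<longleftrightarrow> linear P \<and> P \<circ> P = P"

definition strictly_positive :: "('a::ordered_real_vector \<Rightarrow> 'a) \<Rightarrow> bool" where
  "strictly_positive P \<longleftrightarrow> (\<forall>x. 0 < x \<longrightarrow> 0 < P x)"

end

theory Submission
  imports Defs
begin


context
  fixes dummy :: "'a::{ordered_real_vector, lattice}"
begin
end

lemma inf_add_r: "inf (a + c) (b + c) = inf a b + (c::'a::{ordered_real_vector, lattice})"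
proof (rule antisym)
  have "inf (a + c) (b + c) - c \<le> a" "inf (a + c) (b + c) - c \<le> b"
    using inf_le1[of "a+c" "b+c"] inf_le2[of "a+c" "b+c"] by (simp_all add: diff_le_eq)
  then have "inf (a + c) (b + c) - c \<le> inf a b" by simp
  then show "inf (a + c) (b + c) \<le> inf a b + c" by (simp only: diff_le_eq)
  show "inf a b + c \<le> inf (a + c) (b + c)" by (simp add: add_right_mono)
qed

lemma sup_add_r: "sup (a + c) (b + c) = sup a b + (c::'a::{ordered_real_vector, lattice})"
proof (rule antisym)
  have "a \<le> sup (a + c) (b + c) - c" "b \<le> sup (a + c) (b + c) - c"
    using sup_ge1[of "a+c" "b+c"] sup_ge2[of "a+c" "b+c"] by (simp_all add: le_diff_eq)
  then have "sup a b \<le> sup (a + c) (b + c) - c" by simp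
  then show "sup a b + c \<le> sup (a + c) (b + c)" by (simp add: le_diff_eq)
  show "sup (a + c) (b + c) \<le> sup a b + c" by (simp add: add_right_mono)
qed

lemma neg_sup: "- sup a b = inf (- a) (- (b::'a::{ordered_real_vector, lattice}))"
proof (rule antisym)
  show "- sup a b \<le> inf (- a) (- b)" by simp
  have "a \<le> - inf (- a) (- b)" "b \<le> - inf (- a) (- b)"
    using inf_le1[of "-a" "-b"] inf_le2[of "-a" "-b"] by (simp_all add: le_minus_iff)
  then have "sup a b \<le> - inf (- a) (- b)" by simp
  then show "inf (- a) (- b) \<le> - sup a b" by (simp add: le_minus_iff)
qed

lemma neg_inf: "- inf a b = sup (- a) (- (b::'a::{ordered_real_vector, lattice}))"
  using neg_sup[of "-a" "-b"] by (metis minus_minus)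

lemma sup_inf_sum: "sup a b + inf a b = a + (b::'a::{ordered_real_vector, lattice})"
proof -
  have "inf a b = - sup (-a) (-b)" by (simp add: neg_sup)
  also have "sup (-a) (-b) = sup (-a + (a+b)) (-b + (a+b)) - (a+b)"
    by (simp only: sup_add_r) simp
  also have "sup (-a + (a+b)) (-b + (a+b)) = sup a b"
    by (simp add: sup_commute algebra_simps)
  finally show ?thesis by (simp add: algebra_simps)
qed

lemma scaleR_sup: "0 \<le> c \<Longrightarrow> c *\<^sub>R sup a b = sup (c *\<^sub>R a) (c *\<^sub>R (b::'a::{ordered_real_vector, lattice}))"
proof (cases "c = 0")
  case False
  assume c: "0 \<le> c"
  show ?thesis
  proof (rule antisym)
    show "sup (c *\<^sub>R a) (c *\<^sub>R b) \<le> c *\<^sub>R sup a b"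
      using c by (simp add: scaleR_left_mono)
    have "(1/c) *\<^sub>R sup (c *\<^sub>R a) (c *\<^sub>R b) \<ge> (1/c) *\<^sub>R (c *\<^sub>R a)"
         "(1/c) *\<^sub>R sup (c *\<^sub>R a) (c *\<^sub>R b) \<ge> (1/c) *\<^sub>R (c *\<^sub>R b)"
      using c by (intro scaleR_left_mono; simp)+
    then have "a \<le> (1/c) *\<^sub>R sup (c *\<^sub>R a) (c *\<^sub>R b)" "b \<le> (1/c) *\<^sub>R sup (c *\<^sub>R a) (c *\<^sub>R b)"
      using False by simp_all
    then have "sup a b \<le> (1/c) *\<^sub>R sup (c *\<^sub>R a) (c *\<^sub>R b)" using False by simp
    then have "c *\<^sub>R sup a b \<le> c *\<^sub>R ((1/c) *\<^sub>R sup (c *\<^sub>R a) (c *\<^sub>R b))"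
      using c by (rule scaleR_left_mono)
    then show "c *\<^sub>R sup a b \<le> sup (c *\<^sub>R a) (c *\<^sub>R b)" using False by simp
  qed
qed simp

lemma scaleR_inf: "0 \<le> c \<Longrightarrow> c *\<^sub>R inf a b = inf (c *\<^sub>R a) (c *\<^sub>R (b::'a::{ordered_real_vector, lattice}))"
proof -
  assume c: "0 \<le> c"
  have "inf a b = - sup (-a) (-b)" using neg_sup[of "-a" "-b"] by simp
  then have "c *\<^sub>R inf a b = - (c *\<^sub>R sup (-a) (-b))" by simp
  also have "\<dots> = - sup (- (c *\<^sub>R a)) (- (c *\<^sub>R b))" using c by (simp add: scaleR_sup)
  also have "\<dots> = inf (c *\<^sub>R a) (c *\<^sub>R b)" using neg_sup[of "- (c *\<^sub>R a)" "- (c *\<^sub>R b)"] by simp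
  finally show ?thesis .
qed

lemma labs_ge: "x \<le> labs x" "- x \<le> labs x"
  by (simp_all add: labs_def)

lemma labs_nonneg: "0 \<le> labs (x::'a::{ordered_real_vector, lattice})"
proof -
  have "x + - x \<le> labs x + labs x" using labs_ge by (rule add_mono)
  then have "0 \<le> 2 *\<^sub>R labs x" by (simp add: scaleR_2)
  then have "(1/2) *\<^sub>R 0 \<le> (1/2::real) *\<^sub>R (2 *\<^sub>R labs x)" by (rule scaleR_left_mono) simp
  then show ?thesis by simp
qed

lemma labs_pos: "0 \<le> x \<Longrightarrow> labs (x::'a::{ordered_real_vector, lattice}) = x"
  unfolding labs_def by (rule sup_absorb1) (meson neg_le_0_iff_le order_trans)

lemma labs_labs: "labs (labs (x::'a::{ordered_real_vector, lattice})) = labs x"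
  by (rule labs_pos[OF labs_nonneg])

lemma labs_neg: "labs (- x) = labs x"
  by (simp add: labs_def sup_commute)

lemma labs_le: "d \<le> c \<Longrightarrow> - d \<le> c \<Longrightarrow> labs d \<le> c"
  by (simp add: labs_def)

lemma labs_zero: "labs (x::'a::{ordered_real_vector, lattice}) = 0 \<longleftrightarrow> x = 0"
proof
  assume h: "labs x = 0"
  have "x \<le> 0" using labs_ge(1)[of x] h by simp
  moreover have "-x \<le> 0" using labs_ge(2)[of x] h by simp
  ultimately show "x = 0" using neg_le_0_iff_le by (metis order.antisym)
qed (simp add: labs_def)

lemma labs_tri: "labs (a + b) \<le> labs a + labs (b::'a::{ordered_real_vector, lattice})"
  by (rule labs_le) (use add_mono[OF labs_ge(1)[of a] labs_ge(1)[of b]] add_mono[OF labs_ge(2)[of a] labs_ge(2)[of b]] in simp_all)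

lemma labs_scaleR: "labs (c *\<^sub>R (x::'a::{ordered_real_vector, lattice})) = \<bar>c\<bar> *\<^sub>R labs x"
proof -
  have pos: "labs (d *\<^sub>R x) = d *\<^sub>R labs x" if "0 \<le> d" for d
    using that by (simp add: labs_def scaleR_sup)
  show ?thesis
proof (cases "0 \<le> c")
  case True
  then show ?thesis by (simp add: pos)
next
  case False
  then have "labs (c *\<^sub>R x) = labs ((-c) *\<^sub>R x)" by (metis labs_neg scaleR_minus_left)
  also have "\<dots> = (-c) *\<^sub>R labs x" using False by (intro pos) simp
  finally show ?thesis using False by simp
qed
qed

lemma labs_diff: "labs (labs a - labs b) \<le> labs (a - (b::'a::{ordered_real_vector, lattice}))"
proof (rule labs_le)
  have "labs a \<le> labs b + labs (a - b)" using labs_tri[of b "a - b"] by simp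
  then show "labs a - labs b \<le> labs (a - b)" by (simp add: diff_le_eq add.commute)
  have "labs b \<le> labs a + labs (a - b)" using labs_tri[of a "b - a"] labs_neg[of "a - b"] by simp
  then show "- (labs a - labs b) \<le> labs (a - b)" by (simp add: diff_le_eq add.commute)
qed

lemma inf_shift: "0 \<le> c \<Longrightarrow> inf (b + c) z \<le> inf b z + (c::'a::{ordered_real_vector, lattice})"
proof -
  assume "0 \<le> c"
  then have "inf (b + c) z \<le> inf (b + c) (z + c)" by (simp add: le_infI2)
  then show ?thesis by (simp add: inf_add_r)
qed

lemma inf_lip: "labs (inf a z - inf b z) \<le> labs (a - (b::'a::{ordered_real_vector, lattice}))"
proof (rule labs_le)
  have "inf a z \<le> inf (b + labs (a - b)) z"
    by (metis add.commute diff_le_eq inf_mono labs_ge(1) order_refl)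
  also have "\<dots> \<le> inf b z + labs (a - b)" by (rule inf_shift[OF labs_nonneg])
  finally show "inf a z - inf b z \<le> labs (a - b)" by (simp add: diff_le_eq add.commute)
  have "inf b z \<le> inf (a + labs (a - b)) z"
    by (metis add.commute diff_le_eq inf_mono labs_ge(2) minus_diff_eq order_refl)
  also have "\<dots> \<le> inf a z + labs (a - b)" by (rule inf_shift[OF labs_nonneg])
  finally show "- (inf a z - inf b z) \<le> labs (a - b)" by (simp add: diff_le_eq add.commute)
qed

lemma disj_add: "0 \<le> a \<Longrightarrow> 0 \<le> b \<Longrightarrow> inf a z = 0 \<Longrightarrow> inf b z = 0 \<Longrightarrow> inf (a + b) z = (0::'a::{ordered_real_vector, lattice})"
proof -
  assume a: "0 \<le> a" and b: "0 \<le> b" and az: "inf a z = 0" and bz: "inf b z = 0"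
  have "inf (a + b) z \<le> inf a z + b" by (rule inf_shift[OF b])
  then have "inf (a + b) z \<le> b" using az by simp
  then have "inf (a + b) z \<le> inf b z" by simp
  moreover have "inf a z \<le> inf (a + b) z" using b by (simp add: le_infI1 add_increasing2)
  ultimately show ?thesis using az bz by (metis antisym)
qed

lemma disj_mono: "0 \<le> a \<Longrightarrow> a \<le> b \<Longrightarrow> 0 \<le> z \<Longrightarrow> inf b z = 0 \<Longrightarrow> inf a z = (0::'a::{ordered_real_vector, lattice})"
  by (metis antisym inf_greatest inf_mono order_refl)

lemma disj_scale: "0 \<le> a \<Longrightarrow> 0 \<le> z \<Longrightarrow> 0 \<le> c \<Longrightarrow> inf a z = 0 \<Longrightarrow> inf (c *\<^sub>R a) z = (0::'a::{ordered_real_vector, lattice})"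
proof -
  assume a: "0 \<le> a" and z: "0 \<le> z" and c: "0 \<le> c" and az: "inf a z = 0"
  show ?thesis
  proof (cases "c \<le> 1")
    case True
    have "c *\<^sub>R a \<le> 1 *\<^sub>R a" by (rule scaleR_right_mono[OF True a])
    moreover have "0 \<le> c *\<^sub>R a" using a c by (simp add: scaleR_nonneg_nonneg)
    ultimately show ?thesis using disj_mono[OF _ _ z az] by simp
  next
    case False
    have "z = 1 *\<^sub>R z" by simp
    also have "\<dots> \<le> c *\<^sub>R z" using False z by (intro scaleR_right_mono) auto
    finally have "inf (c *\<^sub>R a) z \<le> inf (c *\<^sub>R a) (c *\<^sub>R z)" by (simp add: le_infI2)
    also have "\<dots> = c *\<^sub>R inf a z" using c by (simp add: scaleR_inf)
    finally have "inf (c *\<^sub>R a) z \<le> 0" using az by simp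
    moreover have "0 \<le> inf (c *\<^sub>R a) z" using a z c by (simp add: scaleR_nonneg_nonneg)
    ultimately show ?thesis by simp
  qed
qed

lemma pos_neg_parts:
  fixes w :: "'a::{ordered_real_vector, lattice}"
  shows "sup w 0 - sup (- w) 0 = w" "inf (sup w 0) (sup (- w) 0) = 0"
proof -
  have m: "sup (- w) 0 = - inf w 0" by (simp add: neg_inf)
  show pm: "sup w 0 - sup (- w) 0 = w" using sup_inf_sum[of w 0] m by simp
  have "inf (sup w 0) (sup (- w) 0) = inf (0 + sup w 0) (- w + sup w 0)"
    using pm by (metis add.commute add_0 diff_add_cancel minus_diff_eq m)
  also have "\<dots> = inf 0 (- w) + sup w 0" by (rule inf_add_r)
  also have "inf 0 (- w) = - sup 0 w" by (simp add: neg_sup)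
  finally show "inf (sup w 0) (sup (- w) 0) = 0" by (simp add: sup_commute)
qed



lemma lip_cont:
  fixes f :: "'a::metric_space \<Rightarrow> 'b::metric_space"
  assumes "\<And>a b. dist (f a) (f b) \<le> K * dist a b" "0 \<le> K"
  shows "continuous (at x) f"
proof -
  have "K-lipschitz_on UNIV f" by (rule lipschitz_onI) (use assms in auto)
  then have "continuous_on UNIV f" by (rule lipschitz_on_continuous_on)
  then show ?thesis by (simp add: continuous_on_eq_continuous_at)
qed

context
  fixes dummy :: "'a::{banach, ordered_real_vector, lattice}"
  assumes bl: "banach_lattice_norm TYPE('a)"
begin

lemma norm_mono_labs: "labs u \<le> labs v \<Longrightarrow> norm u \<le> norm (v::'a)"
  using bl unfolding banach_lattice_norm_def by blast

lemma norm_labs: "norm (labs x) = norm (x::'a)"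
  by (intro antisym norm_mono_labs) (simp_all add: labs_labs)

lemma norm_mono_pos: "0 \<le> u \<Longrightarrow> u \<le> v \<Longrightarrow> norm u \<le> norm (v::'a)"
  by (rule norm_mono_labs) (simp add: labs_pos order_trans)

lemma norm_lip: "labs u \<le> labs v \<Longrightarrow> norm u \<le> norm (labs (v::'a))"
  using norm_mono_labs norm_labs by metis

lemma closed_cone: "closed {x::'a. 0 \<le> x}"
proof -
  have eq: "{x::'a. 0 \<le> x} = (\<lambda>x. inf x 0) -` {0}"
    by (auto simp: inf_absorb1 inf.absorb_iff2)
  have "continuous (at x) (\<lambda>x::'a. inf x 0)" for x
  proof (rule lip_cont[where K=1])
    fix a b :: 'a
    show "dist (inf a 0) (inf b 0) \<le> 1 * dist a b"
      using norm_lip[OF inf_lip[of a 0 b]] by (simp add: dist_norm norm_labs)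
  qed simp
  then show ?thesis unfolding eq by (intro continuous_closed_vimage) auto
qed

lemma closed_ge: "closed {x::'a. a \<le> x}"
proof -
  have eq: "{x::'a. a \<le> x} = (\<lambda>x. x - a) -` {x. 0 \<le> x}" by auto
  show ?thesis unfolding eq
    by (intro continuous_closed_vimage[OF closed_cone] continuous_intros)
qed

lemma pos_op_bounded:
  fixes P :: "'a \<Rightarrow> 'a"
  assumes lin: "linear P" and pos: "\<And>x. 0 \<le> x \<Longrightarrow> 0 \<le> P x"
  shows "\<exists>C\<ge>0. \<forall>x. norm (P x) \<le> C * norm x"
proof -
  have mono: "P a \<le> P b" if "a \<le> b" for a b
  proof -
    have "0 \<le> P (b - a)" using pos that by simp
    then show ?thesis by (simp add: linear_diff[OF lin])
  qed
  have posb: "\<exists>C. \<forall>x. 0 \<le> x \<longrightarrow> norm (P x) \<le> C * norm x"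
  proof (rule ccontr)
    assume "\<not> ?thesis"
    then have "\<forall>n::nat. \<exists>x. 0 \<le> x \<and> 4^n * norm x < norm (P x)"
      by (metis not_le)
    then obtain x where x: "\<And>n. 0 \<le> x n" "\<And>n. 4^n * norm (x n) < norm (P (x n))"
      by metis
    have nz: "x n \<noteq> 0" for n
      using x(2)[of n] by (auto simp: linear_0[OF lin])
    define u where "u n = (1 / (2^n * norm (x n))) *\<^sub>R x n" for n
    have upos: "0 \<le> u n" for n
      unfolding u_def using x(1) by (intro scaleR_nonneg_nonneg) auto
    have unorm: "norm (u n) = (1/2)^n" for n
      using nz[of n] by (simp add: u_def power_divide)
    have Pu: "2^n < norm (P (u n))" for n
    proof -
      have "norm (P (u n)) = norm (P (x n)) / (2^n * norm (x n))"
        unfolding u_def linear_scale[OF lin] by simp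
      moreover have "2^n * (2^n * norm (x n)) < norm (P (x n))"
        using x(2)[of n] by (simp add: power_mult_distrib[symmetric] mult.assoc[symmetric])
      ultimately have "(2^n * norm (x n)) * 2^n < (2^n * norm (x n)) * norm (P (u n))"
        using nz[of n] by (simp add: field_simps)
      moreover have "0 < 2^n * norm (x n)" using nz[of n] by simp
      ultimately show ?thesis using mult_less_cancel_left_pos by blast
    qed
    have "summable (\<lambda>n. norm (u n))" unfolding unorm by simp
    then have su: "summable u" by (rule summable_norm_cancel)
    define s where "s = suminf u"
    have le: "u n \<le> s" for n
    proof -
      have lim: "(\<lambda>N. \<Sum>k<N. u k) \<longlonglongrightarrow> s" unfolding s_def using su by (rule summable_LIMSEQ)
      have "eventually (\<lambda>N. (\<Sum>k<N. u k) \<in> {v. u n \<le> v}) sequentially"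
      proof (rule eventually_sequentiallyI[of "Suc n"])
        fix N assume "Suc n \<le> N"
        then have "n \<in> {..<N}" by simp
        then have "(\<Sum>k<N. u k) = u n + (\<Sum>k\<in>{..<N} - {n}. u k)"
          by (simp add: sum.remove)
        moreover have "0 \<le> (\<Sum>k\<in>{..<N} - {n}. u k)" by (rule sum_nonneg) (simp add: upos)
        ultimately show "(\<Sum>k<N. u k) \<in> {v. u n \<le> v}" by simp
      qed
      from Lim_in_closed_set[OF closed_ge this _ lim] show ?thesis by simp
    qed
    have "2^n < norm (P s)" for n
    proof -
      have "norm (P (u n)) \<le> norm (P s)"
        by (rule norm_mono_pos[OF pos[OF upos] mono[OF le]])
      then show ?thesis using Pu[of n] by simp
    qed
    moreover obtain n where "norm (P s) < 2^n"
      using real_arch_pow[of 2 "norm (P s)"] by auto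
    ultimately show False using less_asym by blast
  qed
  then obtain C where C: "\<And>x. 0 \<le> x \<Longrightarrow> norm (P x) \<le> C * norm x" by blast
  have "norm (P x) \<le> max C 0 * norm x" for x
  proof -
    have "labs (P x) \<le> P (labs x)"
      by (rule labs_le) (use mono[OF labs_ge(1)] mono[OF labs_ge(2)] linear_neg[OF lin] in auto)
    then have "labs (P x) \<le> labs (P (labs x))" using labs_pos[OF pos[OF labs_nonneg]] by simp
    then have "norm (P x) \<le> norm (labs (P (labs x)))" by (rule norm_lip)
    also have "\<dots> = norm (P (labs x))" by (rule norm_labs)
    also have "\<dots> \<le> C * norm (labs x)" by (rule C[OF labs_nonneg])
    also have "\<dots> \<le> max C 0 * norm x" by (simp add: norm_labs mult_right_mono)
    finally show ?thesis .
  qed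
  then show ?thesis by (intro exI[of _ "max C 0"]) auto
qed

end


theorem lemma2p4:
  fixes P :: "'a::{banach, ordered_real_vector, lattice} \<Rightarrow> 'a"
  assumes "banach_lattice_norm TYPE('a)"
    and "\<exists>x::'a. x \<noteq> 0"
    and "projection P"
    and "strictly_positive P"
    and "\<And>J. lattice_ideal J \<Longrightarrow> closed J \<Longrightarrow> P ` J \<subseteq> J \<Longrightarrow> J = {0} \<or> J = UNIV"
  shows "dim (range P) = 1"
proof -
  note bl = assms(1)
  have lin: "linear P" using assms(3) by (simp add: projection_def)
  have idem: "P (P x) = P x" for x
    using assms(3) unfolding projection_def by (metis comp_apply)
  have sp: "0 < P x" if "0 < x" for x
    using assms(4) that by (simp add: strictly_positive_def)
  have pos: "0 \<le> P x" if "0 \<le> x" for x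
    using that sp linear_0[OF lin] by (cases "x = 0") (auto simp: order.order_iff_strict)
  have mono: "P a \<le> P b" if "a \<le> b" for a b
  proof -
    have "0 \<le> P (b - a)" using pos that by simp
    then show ?thesis by (simp add: linear_diff[OF lin])
  qed
  have labsP: "labs (P x) \<le> P (labs x)" for x
    by (rule labs_le) (use mono[OF labs_ge(1)] mono[OF labs_ge(2)] linear_neg[OF lin] in auto)
  obtain K where K: "0 \<le> K" "\<And>x. norm (P x) \<le> K * norm x"
    using pos_op_bounded[OF bl lin pos] by blast
  have fixup: "P v = v" if "v \<le> P v" for v
  proof (rule ccontr)
    assume "P v \<noteq> v"
    then have "0 < P v - v" using that by simp
    then have "0 < P (P v - v)" by (rule sp)
    then show False by (simp add: linear_diff[OF lin] idem)
  qed
  have nodisj: "inf y z \<noteq> 0" if y: "P y = y" "0 < y" and z: "P z = z" "0 < z" for y z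
  proof
    assume yz: "inf y z = 0"
    define J where "J = {x. inf (P (labs x)) z = 0}"
    have z0: "0 \<le> z" using z by simp
    have Q0: "0 \<le> P (labs x)" for x by (rule pos[OF labs_nonneg])
    have sub: "subspace J"
      unfolding subspace_def
    proof (intro conjI ballI allI)
      show "0 \<in> J" using z0 by (simp add: J_def labs_def linear_0[OF lin] inf_absorb1)
    next
      fix a b assume "a \<in> J" "b \<in> J"
      then have a: "inf (P (labs a)) z = 0" and b: "inf (P (labs b)) z = 0" by (auto simp: J_def)
      have "P (labs (a + b)) \<le> P (labs a) + P (labs b)"
        using mono[OF labs_tri[of a b]] by (simp add: linear_add[OF lin])
      then show "a + b \<in> J" unfolding J_def
        using disj_mono[OF Q0 _ z0 disj_add[OF Q0 Q0 a b]] by simp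
    next
      fix c and a assume "a \<in> J"
      then have a: "inf (P (labs a)) z = 0" by (auto simp: J_def)
      have "P (labs (c *\<^sub>R a)) = \<bar>c\<bar> *\<^sub>R P (labs a)"
        by (simp add: labs_scaleR linear_scale[OF lin])
      then show "c *\<^sub>R a \<in> J" unfolding J_def
        using disj_scale[OF Q0 z0 _ a, of "\<bar>c\<bar>"] by simp
    qed
    have ideal: "lattice_ideal J"
      unfolding lattice_ideal_def
    proof (intro conjI sub allI impI)
      fix x w assume h: "w \<in> J \<and> labs x \<le> labs w"
      then show "x \<in> J" unfolding J_def
        using disj_mono[OF Q0 mono[of "labs x" "labs w"] z0] by simp
    qed
    have cl: "closed J"
    proof -
      have eq: "J = (\<lambda>x. inf (P (labs x)) z) -` {0}" by (auto simp: J_def)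
      have "continuous (at x) (\<lambda>x. inf (P (labs x)) z)" for x
      proof (rule lip_cont[OF _ K(1)])
        fix a b
        have "norm (inf (P (labs a)) z - inf (P (labs b)) z) \<le> norm (labs (P (labs a) - P (labs b)))"
          by (rule norm_lip[OF bl inf_lip])
        also have "\<dots> = norm (P (labs a - labs b))" by (simp add: norm_labs[OF bl] linear_diff[OF lin])
        also have "\<dots> \<le> K * norm (labs a - labs b)" by (rule K(2))
        also have "norm (labs a - labs b) \<le> norm (labs (a - b))" by (rule norm_lip[OF bl labs_diff])
        also have "norm (labs (a - b)) = norm (a - b)" by (rule norm_labs[OF bl])
        finally show "dist (inf (P (labs a)) z) (inf (P (labs b)) z) \<le> K * dist a b"
          using K(1) by (simp add: dist_norm mult_left_mono)
      qed
      then show ?thesis unfolding eq by (intro continuous_closed_vimage) auto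
    qed
    have inv: "P ` J \<subseteq> J"
    proof
      fix v assume "v \<in> P ` J"
      then obtain x where x: "x \<in> J" "v = P x" by blast
      have "P (labs (P x)) \<le> P (labs x)" using mono[OF labsP] idem by simp
      then show "v \<in> J" using x disj_mono[OF Q0 _ z0] by (simp add: J_def)
    qed
    have yJ: "y \<in> J" using y yz by (simp add: J_def labs_pos)
    have zJ: "z \<notin> J" using z by (simp add: J_def labs_pos)
    from assms(5)[OF ideal cl inv] yJ zJ y show False by auto
  qed
  have dich: "w \<le> 0 \<or> 0 \<le> w" if w: "P w = w" for w
  proof -
    let ?p = "sup w 0" and ?m = "sup (- w) 0"
    have Pp: "P ?p = ?p"
      by (rule fixup) (use mono[of w ?p] pos[of ?p] w in simp)
    have Pm: "P ?m = ?m"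
      by (rule fixup) (use mono[of "-w" ?m] pos[of ?m] w linear_neg[OF lin] in simp)
    have d: "inf ?p ?m = 0" by (rule pos_neg_parts(2))
    show ?thesis
    proof (cases "?p = 0")
      case True
      then show ?thesis by (metis sup_ge1)
    next
      case False
      show ?thesis
      proof (cases "?m = 0")
        case True
        then have "- w \<le> 0" by (metis sup_ge1)
        then show ?thesis by simp
      next
        case mF: False
        have "0 < ?p" "0 < ?m" using False mF sup_ge2[of 0 w] sup_ge2[of 0 "-w"]
          by (simp_all add: order.order_iff_strict)
        then show ?thesis using nodisj[OF Pp _ Pm] d by blast
      qed
    qed
  qed
  obtain x0 :: 'a where "x0 \<noteq> 0" using assms(2) by blast
  then have "0 < labs x0" using labs_nonneg[of x0] labs_zero[of x0] by (simp add: order.order_iff_strict)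
  define y where "y = P (labs x0)"
  have y: "0 < y" "P y = y" using sp[OF \<open>0 < labs x0\<close>] idem by (simp_all add: y_def)
  have mult: "\<exists>c. z = c *\<^sub>R y" if z: "P z = z" "0 \<le> z" for z
  proof (rule ccontr)
    assume nc: "\<not> ?thesis"
    define S where "S = {t::real. t *\<^sub>R y \<le> z}"
    define T where "T = {t::real. z \<le> t *\<^sub>R y}"
    have "S = (\<lambda>t. z - t *\<^sub>R y) -` {x. 0 \<le> x}" by (auto simp: S_def)
    then have cS: "closed S"
      by (simp only:) (intro continuous_closed_vimage[OF closed_cone[OF bl]] continuous_intros)
    have "T = (\<lambda>t. t *\<^sub>R y - z) -` {x. 0 \<le> x}" by (auto simp: T_def)
    then have cT: "closed T"
      by (simp only:) (intro continuous_closed_vimage[OF closed_cone[OF bl]] continuous_intros)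
    have cover: "UNIV \<subseteq> S \<union> T"
    proof
      fix t :: real
      have "P (z - t *\<^sub>R y) = z - t *\<^sub>R y" using z y by (simp add: linear_diff[OF lin] linear_scale[OF lin])
      from dich[OF this] show "t \<in> S \<union> T" by (auto simp: S_def T_def)
    qed
    have disj: "S \<inter> T \<inter> UNIV = {}"
    proof (rule ccontr)
      assume "S \<inter> T \<inter> UNIV \<noteq> {}"
      then obtain t where "t \<in> S" "t \<in> T" by blast
      then have "t *\<^sub>R y \<le> z" "z \<le> t *\<^sub>R y" by (simp_all add: S_def T_def)
      then have "z = t *\<^sub>R y" by (rule antisym[rotated])
      then show False using nc by blast
    qed
    have "0 \<in> S" using z by (simp add: S_def)
    define t where "t = (norm z + 1) / norm y"
    have ny: "0 < norm y" using y by auto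
    have "t \<notin> S"
    proof
      assume "t \<in> S"
      then have "t *\<^sub>R y \<le> z" by (simp add: S_def)
      moreover have "0 \<le> t *\<^sub>R y" using y ny by (intro scaleR_nonneg_nonneg) (auto simp: t_def)
      ultimately have "norm (t *\<^sub>R y) \<le> norm z" using norm_mono_pos[OF bl] by blast
      moreover have "norm (t *\<^sub>R y) = norm z + 1" using ny by (simp add: t_def)
      ultimately show False by simp
    qed
    then have "t \<in> T" using cover by auto
    have "connected (UNIV :: real set)" by simp
    then show False unfolding connected_closed
      using cS cT cover disj \<open>0 \<in> S\<close> \<open>t \<in> T\<close> by blast
  qed
  have rng: "range P = span {y}"
  proof
    show "range P \<subseteq> span {y}"
    proof
      fix v assume "v \<in> range P"
      then have v: "P v = v" using idem by auto
      let ?p = "sup v 0" and ?m = "sup (- v) 0"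
      have Pp: "P ?p = ?p"
        by (rule fixup) (use mono[of v ?p] pos[of ?p] v in simp)
      have Pm: "P ?m = ?m"
        by (rule fixup) (use mono[of "-v" ?m] pos[of ?m] v linear_neg[OF lin] in simp)
      obtain a where a: "?p = a *\<^sub>R y" using mult[OF Pp] by auto
      obtain b where b: "?m = b *\<^sub>R y" using mult[OF Pm] by auto
      have "v = (a - b) *\<^sub>R y" using pos_neg_parts(1)[of v] a b by (simp add: scaleR_diff_left)
      then show "v \<in> span {y}" by (simp add: span_base span_scale)
    qed
    show "span {y} \<subseteq> range P"
    proof
      fix v assume "v \<in> span {y}"
      then obtain k where "v = k *\<^sub>R y" by (auto simp: span_singleton)
      then have "P v = v" using y by (simp add: linear_scale[OF lin])
      then show "v \<in> range P" by (metis rangeI)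
    qed
  qed
  have "y \<notin> span {}" using y by auto
  then have "independent {y}" by (intro independent_insertI independent_empty)
  then have "dim {y} = 1" by (simp add: dim_eq_card_independent)
  then show ?thesis by (simp add: rng)
qed

end
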